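(* Assume there exist $P,\bar P\in\mathcal S^d$ solving $$\gamma[A^\top P+2Q]\big(A+(B_1\Gamma_1+B_2\Gamma_2)P\big)=P,$$ $$\gamma\big[(A+\bar A)^\top\bar P+2(Q+\bar Q)\big]\big[(A+\bar A)+\big((B_1+\bar B_1)\Lambda_1+(B_2+\bar B_2)\Lambda_2\big)\bar P\big]=\bar P.$$ Consider the controls $u_{i,t}=\Gamma_iP(x_t-\bar x_t)+\Lambda_i\bar P\bar x_t$, $i=1,2$, where $x$ is the state process controlled by $(u_{1,t},u_{2,t})$ and $\bar x_t=\mathbb E[x_t\mid\mathcal F^0]$, and define $p_t=P(x_t-\bar x_t)+\bar P\bar x_t$, $t\ge0$. Then $p$ is an adjoint process, and the pair $(u_1,u_2)$ satisfies the equilibrium condition: for all $t\ge0$, $$B_1^\top p_t+2R_1u_{1,t}+\bar B_1^\top\bar p_t+2\bar R_1\bar u_{1,t}=0,\qquad B_2^\top p_t-2R_2u_{2,t}+\bar B_2^\top\bar p_t-2\bar R_2\bar u_{2,t}=0.$$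
   Context: $\mathcal S^d$ denotes symmetric $d\times d$ real matrices. Fix $d,\ell\ge1$, $\gamma\in(0,1]$, $A,\bar A\in\mathbb R^{d\times d}$, $B_1,\bar B_1,B_2,\bar B_2\in\mathbb R^{d\times\ell}$, $Q,\bar Q\in\mathcal S^d$, $R_1,\bar R_1,R_2,\bar R_2\in\mathcal S^\ell$ with $R_i$ and $R_i+\bar R_i$ positive definite. Define for $i=1,2$: $\Gamma_i=(-1)^i\frac12R_i^{-1}B_i^\top$ and $\Lambda_i=(-1)^i\frac12(R_i+\bar R_i)^{-1}(B_i+\bar B_i)^\top$. Probability space $(\Omega,\mathcal F,\mathbb P)=(\Omega^0\times\Omega^1,\mathcal F^0\otimes\mathcal F^1,\mathbb P^0\otimes\mathbb P^1)$; noises $\epsilon^0_t(\omega)=\tilde\epsilon^0_t(\omega^0)$, $\epsilon^1_t(\omega)=\tilde\epsilon^1_t(\omega^1)$, $t\ge0$, where $(\tilde\epsilon^j_t)_{t\ge1}$ are i.i.d. mean-zero square integrable $\mathbb R^d$-valued and $\tilde\epsilon^j_0\sim\mu^j_0$ is independent of them. $\mathcal F_t=\sigma(\epsilon^0_s,\epsilon^1_s:s\le t)$; for a random variable $\xi$, $\bar\xi=\mathbb E[\xi\mid\mathcal F^0]$ (integration over $\omega^1$). The state controlled by $(u_1,u_2)$ is $x_0=\epsilon^0_0+\epsilon^1_0$, $x_{t+1}=Ax_t+\bar A\bar x_t+B_1u_{1,t}+\bar B_1\bar u_{1,t}+B_2u_{2,t}+\bar B_2\bar u_{2,t}+\epsilon^0_{t+1}+\epsilon^1_{t+1}$.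 An adjoint process (for state $x$) is an $\mathbb R^d$-valued $(\mathcal F_t)$-adapted process $p$ with $p_t=\gamma\mathbb E[A^\top p_{t+1}+2Qx_{t+1}+\bar A^\top\bar p_{t+1}+2\bar Q\bar x_{t+1}\mid\mathcal F_t]$ for all $t\ge0$. *)

theory Defs
  imports "HOL-Analysis.Analysis" "HOL-Probability.Probability"
begin

definition symmetric_mat :: "real^'n^'n \<Rightarrow> bool" where
  "symmetric_mat M \<longleftrightarrow> transpose M = M"

definition pos_def_mat :: "real^'n^'n \<Rightarrow> bool" where
  "pos_def_mat M \<longleftrightarrow> symmetric_mat M \<and> (\<forall>v. v \<noteq> 0 \<longrightarrow> 0 < v \<bullet> (M *v v))"

definition gain :: "nat \<Rightarrow> real^'l^'l \<Rightarrow> real^'l^'d \<Rightarrow> real^'d^'l" where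
  "gain i R B = (((-1) ^ i) / 2) *\<^sub>R (matrix_inv R ** transpose B)"

text \<open>The operator xi |-> xi-bar = E[xi | F^0], i.e. integration over omega^1,
  on the product space Omega^0 x Omega^1.\<close>
definition cbar :: "'w1 measure \<Rightarrow> ('w0 \<times> 'w1 \<Rightarrow> 'b::{banach,second_countable_topology})
    \<Rightarrow> 'w0 \<times> 'w1 \<Rightarrow> 'b" where
  "cbar M1 \<xi> \<omega> = (LINT w|M1. \<xi> (fst \<omega>, w))"

definition noise_filt :: "'w0 measure \<Rightarrow> 'w1 measure \<Rightarrow> (nat \<Rightarrow> 'w0 \<Rightarrow> real^'d)
    \<Rightarrow> (nat \<Rightarrow> 'w1 \<Rightarrow> real^'d) \<Rightarrow> nat \<Rightarrow> ('w0 \<times> 'w1) measure" where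
  "noise_filt M0 M1 e0 e1 t = sigma (space (M0 \<Otimes>\<^sub>M M1))
     (\<Union>s\<in>{..t}. {(\<lambda>\<omega>. e0 s (fst \<omega>)) -` B \<inter> space (M0 \<Otimes>\<^sub>M M1) | B. B \<in> sets borel}
              \<union> {(\<lambda>\<omega>. e1 s (snd \<omega>)) -` B \<inter> space (M0 \<Otimes>\<^sub>M M1) | B. B \<in> sets borel})"

definition vcond_exp :: "'a measure \<Rightarrow> 'a measure \<Rightarrow> ('a \<Rightarrow> real^'n) \<Rightarrow> 'a \<Rightarrow> real^'n" where
  "vcond_exp M F X \<omega> = (\<chi> i. real_cond_exp M F (\<lambda>\<eta>. X \<eta> $ i) \<omega>)"

definition adjoint_process ::
  "'w0 measure \<Rightarrow> 'w1 measure \<Rightarrow> (nat \<Rightarrow> 'w0 \<Rightarrow> real^'d) \<Rightarrow> (nat \<Rightarrow> 'w1 \<Rightarrow> real^'d)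
   \<Rightarrow> real \<Rightarrow> real^'d^'d \<Rightarrow> real^'d^'d \<Rightarrow> real^'d^'d \<Rightarrow> real^'d^'d
   \<Rightarrow> (nat \<Rightarrow> 'w0 \<times> 'w1 \<Rightarrow> real^'d) \<Rightarrow> (nat \<Rightarrow> 'w0 \<times> 'w1 \<Rightarrow> real^'d) \<Rightarrow> bool" where
  "adjoint_process M0 M1 e0 e1 \<gamma> A Abar Q Qbar x p \<longleftrightarrow>
     (\<forall>t. p t \<in> borel_measurable (noise_filt M0 M1 e0 e1 t)) \<and>
     (\<forall>t. AE \<omega> in (M0 \<Otimes>\<^sub>M M1).
        p t \<omega> = \<gamma> *\<^sub>R vcond_exp (M0 \<Otimes>\<^sub>M M1) (noise_filt M0 M1 e0 e1 t)
          (\<lambda>\<eta>. transpose A *v p (Suc t) \<eta> + 2 *\<^sub>R (Q *v x (Suc t) \<eta>)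
               + transpose Abar *v cbar M1 (p (Suc t)) \<eta> + 2 *\<^sub>R (Qbar *v cbar M1 (x (Suc t)) \<eta>)) \<omega>)"

definition noise_seq :: "'w measure \<Rightarrow> (nat \<Rightarrow> 'w \<Rightarrow> real^'d) \<Rightarrow> bool" where
  "noise_seq M e \<longleftrightarrow>
     (\<forall>t. e t \<in> borel_measurable M) \<and>
     prob_space.indep_vars M (\<lambda>_. borel) e UNIV \<and>
     (\<forall>t\<ge>1. distr M borel (e t) = distr M borel (e 1)) \<and>
     (\<forall>t. integrable M (e t) \<and> integrable M (\<lambda>\<omega>. (norm (e t \<omega>))\<^sup>2)) \<and>
     (\<forall>t\<ge>1. (LINT \<omega>|M. e t \<omega>) = 0)"

end

theory Submission
  imports Defs
begin


fun seqf :: "real^'d^'d \<Rightarrow> (nat \<Rightarrow> 'w \<Rightarrow> real^'d) \<Rightarrow> real^'d \<Rightarrow> nat \<Rightarrow> 'w \<Rightarrow> real^'d" where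
  "seqf K e c 0 w = e 0 w + c"
| "seqf K e c (Suc t) w = K *v seqf K e c t w + e (Suc t) w"

lemma mv_meas:
  fixes K :: "real^'n^'m"
  assumes "f \<in> borel_measurable N"
  shows "(\<lambda>x. K *v f x) \<in> borel_measurable N"
  by (rule measurable_compose[OF assms borel_measurable_continuous_onI])
     (intro linear_continuous_on matrix_vector_mul_bounded_linear)

lemma seq_meas:
  assumes "\<And>t. e t \<in> borel_measurable N"
  shows "seqf K e c t \<in> borel_measurable N"
  by (induction t) (auto intro!: borel_measurable_add mv_meas assms)

lemma seq_int:
  assumes "\<And>t. integrable N (e t)" "prob_space N"
  shows "integrable N (seqf K e c t)"
proof (induction t)
  case 0
  interpret prob_space N by fact
  show ?case using assms by (auto intro!: Bochner_Integration.integrable_add)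
next
  case (Suc t)
  then show ?case using assms
    by (auto intro!: Bochner_Integration.integrable_add integrable_bounded_linear[where T="(*v) K"])
qed

lemma seq_int0:
  assumes "\<And>t. integrable N (e t)" "prob_space N" "\<And>t. t \<ge> 1 \<Longrightarrow> (LINT w|N. e t w) = 0"
    "c = - (LINT w|N. e 0 w)"
  shows "(LINT w|N. seqf K e c t w) = 0"
proof (induction t)
  case 0
  interpret prob_space N by fact
  show ?case using assms by (simp add: Bochner_Integration.integral_add prob_space)
next
  case (Suc t)
  have i: "integrable N (seqf K e c t)" using seq_int assms by blast
  have "(LINT w|N. seqf K e c (Suc t) w) = (LINT w|N. K *v seqf K e c t w) + (LINT w|N. e (Suc t) w)"
    using assms i by (simp add: Bochner_Integration.integral_add integrable_bounded_linear[where T="(*v) K"])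
  also have "\<dots> = K *v (LINT w|N. seqf K e c t w)"
    using assms(3)[of "Suc t"] integral_bounded_linear[OF matrix_vector_mul_bounded_linear i] by simp
  finally show ?case using Suc by simp
qed

lemma inv_right:
  fixes R :: "real^'l^'l"
  assumes "pos_def_mat R"
  shows "R ** matrix_inv R = mat 1"
proof -
  have "\<forall>x. R *v x = 0 \<longrightarrow> x = 0"
    using assms unfolding pos_def_mat_def by (metis inner_zero_right less_irrefl)
  then have "invertible R" using matrix_left_invertible_ker invertible_left_inverse by blast
  then show ?thesis unfolding invertible_def matrix_inv_def by (metis (mono_tags, lifting) someI_ex)
qed

lemma gain_mul:
  assumes "pos_def_mat R"
  shows "R ** gain i R B = (((-1) ^ i) / 2) *\<^sub>R transpose B"
  unfolding gain_def using inv_right[OF assms]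
  by (simp add: matrix_scalar_ac scalar_matrix_assoc[symmetric] matrix_mul_assoc)


lemma bl_meas:
  fixes h :: "'a::euclidean_space \<Rightarrow> 'b::euclidean_space"
  assumes "bounded_linear h" "f \<in> borel_measurable N"
  shows "(\<lambda>x. h (f x)) \<in> borel_measurable N"
  by (rule measurable_compose[OF assms(2) borel_measurable_continuous_onI])
     (intro linear_continuous_on assms(1))

lemma indep_zero:
  fixes e :: "nat \<Rightarrow> 'w \<Rightarrow> real^'d" and h :: "real^'d \<Rightarrow> real"
  assumes PM: "prob_space M" and noise: "noise_seq M e"
    and S: "S \<in> sigma_sets (space M) (\<Union>s\<in>{..t}. {e s -` B \<inter> space M | B. B \<in> sets borel})"
    and h: "bounded_linear h"
  shows "(\<integral>\<omega>. indicator S \<omega> * h (e (Suc t) \<omega>) \<partial>M) = 0"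
proof -
  interpret prob_space M by fact
  have meas: "\<And>t. e t \<in> borel_measurable M" and ind: "indep_vars (\<lambda>_. borel) e UNIV"
    and int: "\<And>t. integrable M (e t)" and mean0: "\<And>t. t \<ge> 1 \<Longrightarrow> (LINT \<omega>|M. e t \<omega>) = 0"
    using noise unfolding noise_seq_def by auto
  define E where "E i = {e i -` A \<inter> space M | A. A \<in> sets borel}" for i
  have indE: "indep_sets E UNIV"
  proof (rule indep_sets_mono_sets)
    show "indep_sets (\<lambda>i. sigma_sets (space M) (E i)) UNIV"
      using ind unfolding indep_vars_def E_def by blast
    show "E i \<subseteq> sigma_sets (space M) (E i)" for i by auto
  qed
  define I where "I = case_bool {..t} {Suc t}"
  have "indep_sets (\<lambda>j. sigma_sets (space M) (\<Union>i\<in>I j. E i)) UNIV"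
  proof (rule indep_sets_collect_sigma)
    show "indep_sets E (\<Union>j\<in>UNIV. I j)" using indE indep_sets_mono_index by blast
    show "Int_stable (E i)" for i
      unfolding Int_stable_def E_def
      by (auto, rule_tac x="A \<inter> Aa" in exI, auto)
    show "disjoint_family_on I UNIV"
      unfolding disjoint_family_on_def I_def by (auto split: bool.split)
  qed
  then have indS: "indep_set (sigma_sets (space M) (\<Union>i\<in>{..t}. E i)) (sigma_sets (space M) (E (Suc t)))"
    unfolding indep_set_def I_def
    by (rule indep_sets_mono_sets) (auto split: bool.split)
  define G where "G = (\<Union>s\<in>{..t}. E s)"
  have G: "G \<subseteq> Pow (space M)" unfolding G_def E_def by auto
  have SM: "S \<in> sets (sigma (space M) G)" using S G by (simp add: G_def E_def sets_measure_of)
  have Gev: "G \<subseteq> events" unfolding G_def E_def using meas by auto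
  have Sev: "S \<in> events" using S Gev sets.sigma_sets_subset unfolding G_def E_def by blast
  define X1 where "X1 = (indicator S :: 'w \<Rightarrow> real)"
  define X2 where "X2 = (\<lambda>\<omega>. h (e (Suc t) \<omega>))"
  have X2m: "X2 \<in> borel_measurable M" unfolding X2_def by (rule bl_meas[OF h meas])
  have hm: "h \<in> borel_measurable borel" using bl_meas[OF h, of "\<lambda>x. x" borel] by simp
  have "indep_var borel X1 borel X2"
    unfolding indep_var_eq
  proof (intro conjI)
    show "random_variable borel X1" unfolding X1_def using Sev by simp
    show "random_variable borel X2" by (rule X2m)
    have s1: "sigma_sets (space M) {X1 -` A \<inter> space M |A. A \<in> sets borel} \<subseteq> sigma_sets (space M) G"
    proof (rule sigma_sets_mono, safe)
      fix A :: "real set" assume "A \<in> sets borel"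
      have "X1 \<in> borel_measurable (sigma (space M) G)" unfolding X1_def using SM by simp
      then have "X1 -` A \<inter> space (sigma (space M) G) \<in> sets (sigma (space M) G)"
        using \<open>A \<in> sets borel\<close> by (rule measurable_sets)
      then show "X1 -` A \<inter> space M \<in> sigma_sets (space M) G" using G by (simp add: sets_measure_of)
    qed
    have s2: "sigma_sets (space M) {X2 -` A \<inter> space M |A. A \<in> sets borel} \<subseteq> sigma_sets (space M) (E (Suc t))"
    proof (rule sigma_sets_mono, safe)
      fix A :: "real set" assume "A \<in> sets borel"
      then have "h -` A \<in> sets borel" using hm by (metis measurable_sets space_borel inf_top.right_neutral)
      then have "X2 -` A \<inter> space M \<in> E (Suc t)" unfolding E_def X2_def
        by (intro CollectI exI[of _ "h -` A"]) auto
      then show "X2 -` A \<inter> space M \<in> sigma_sets (space M) (E (Suc t))" by auto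
    qed
    show "indep_set (sigma_sets (space M) {X1 -` A \<inter> space M |A. A \<in> sets borel})
        (sigma_sets (space M) {X2 -` A \<inter> space M |A. A \<in> sets borel})"
      using indS s1 s2 unfolding indep_set_def G_def
      by (rule_tac indep_sets_mono_sets) (auto split: bool.split)
  qed
  moreover have "integrable M X1" unfolding X1_def using Sev by (intro integrable_real_indicator) (auto simp: emeasure_eq_measure)
  moreover have "integrable M X2" unfolding X2_def by (rule integrable_bounded_linear[OF h int])
  ultimately have "(\<integral>\<omega>. X1 \<omega> * X2 \<omega> \<partial>M) = (\<integral>\<omega>. X1 \<omega> \<partial>M) * (\<integral>\<omega>. X2 \<omega> \<partial>M)"
    by (rule indep_var_lebesgue_integral)
  moreover have "(\<integral>\<omega>. X2 \<omega> \<partial>M) = 0"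
    unfolding X2_def using integral_bounded_linear[OF h int] mean0[of "Suc t"] linear_0[OF bounded_linear.linear[OF h]]
    by simp
  ultimately show ?thesis unfolding X1_def X2_def by simp
qed



lemma int_fst:
  fixes f :: "'a \<Rightarrow> 'b::{banach,second_countable_topology}"
  assumes M0: "prob_space M0" and M1: "prob_space M1" and f: "integrable M0 f"
  shows "integrable (M0 \<Otimes>\<^sub>M M1) (\<lambda>\<omega>. f (fst \<omega>))"
proof -
  have d: "distr (M0 \<Otimes>\<^sub>M M1) M0 fst = M0" by (rule prob_space.distr_pair_fst[OF M1])
  show ?thesis
    using integrable_distr_eq[OF measurable_fst[of M0 M1] borel_measurable_integrable[OF f]] d f by simp
qed

lemma int_snd:
  fixes f :: "'a \<Rightarrow> 'b::{banach,second_countable_topology}"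
  assumes M0: "prob_space M0" and M1: "prob_space M1" and f: "integrable M1 f"
  shows "integrable (M0 \<Otimes>\<^sub>M M1) (\<lambda>\<omega>. f (snd \<omega>))"
proof -
  interpret P: pair_sigma_finite M1 M0
    by (intro pair_sigma_finite.intro prob_space_imp_sigma_finite M0 M1)
  have "integrable (M1 \<Otimes>\<^sub>M M0) (\<lambda>\<omega>. f (fst \<omega>))" by (rule int_fst[OF M1 M0 f])
  from P.integrable_product_swap[of "\<lambda>\<omega>. f (fst \<omega>)", OF this] show ?thesis by (simp add: case_prod_beta')
qed

definition gsig :: "'w measure \<Rightarrow> (nat \<Rightarrow> 'w \<Rightarrow> real^'d) \<Rightarrow> nat \<Rightarrow> 'w measure" where
  "gsig M e t = sigma (space M) (\<Union>s\<in>{..t}. {e s -` B \<inter> space M | B. B \<in> sets borel})"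

lemma gsig_space: "space (gsig M e t) = space M"
  unfolding gsig_def by (simp add: space_measure_of_conv)

lemma gsig_sets: "sets (gsig M e t) = sigma_sets (space M) (\<Union>s\<in>{..t}. {e s -` B \<inter> space M | B. B \<in> sets borel})"
  unfolding gsig_def by (rule sets_measure_of) auto

lemma gsig_meas:
  fixes e :: "nat \<Rightarrow> 'w \<Rightarrow> real^'d"
  shows "s \<le> t \<Longrightarrow> e s \<in> borel_measurable (gsig M e t)"
proof (rule measurableI)
  fix A :: "(real^'d) set" assume "s \<le> t" "A \<in> sets borel"
  then show "e s -` A \<inter> space (gsig M e t) \<in> sets (gsig M e t)"
    unfolding gsig_sets gsig_space
    by (intro sigma_sets.Basic UN_I[of s]) auto
qed auto

lemma nf_space: "space (noise_filt M0 M1 e0 e1 t) = space (M0 \<Otimes>\<^sub>M M1)"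
  unfolding noise_filt_def by (simp add: space_measure_of_conv)

lemma nf_sets: "sets (noise_filt M0 M1 e0 e1 t) = sigma_sets (space (M0 \<Otimes>\<^sub>M M1))
     (\<Union>s\<in>{..t}. {(\<lambda>\<omega>. e0 s (fst \<omega>)) -` B \<inter> space (M0 \<Otimes>\<^sub>M M1) | B. B \<in> sets borel}
              \<union> {(\<lambda>\<omega>. e1 s (snd \<omega>)) -` B \<inter> space (M0 \<Otimes>\<^sub>M M1) | B. B \<in> sets borel})"
  unfolding noise_filt_def by (rule sets_measure_of) auto

lemma nf_meas0:
  fixes e0 :: "nat \<Rightarrow> 'w0 \<Rightarrow> real^'d"
  shows "s \<le> t \<Longrightarrow> (\<lambda>\<omega>. e0 s (fst \<omega>)) \<in> borel_measurable (noise_filt M0 M1 e0 e1 t)"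
proof (rule measurableI)
  fix A :: "(real^'d) set" assume "s \<le> t" "A \<in> sets borel"
  then show "(\<lambda>\<omega>. e0 s (fst \<omega>)) -` A \<inter> space (noise_filt M0 M1 e0 e1 t) \<in> sets (noise_filt M0 M1 e0 e1 t)"
    unfolding nf_sets nf_space
    by (intro sigma_sets.Basic UN_I[of s]) auto
qed auto

lemma nf_meas1:
  fixes e1 :: "nat \<Rightarrow> 'w1 \<Rightarrow> real^'d"
  shows "s \<le> t \<Longrightarrow> (\<lambda>\<omega>. e1 s (snd \<omega>)) \<in> borel_measurable (noise_filt M0 M1 e0 e1 t)"
proof (rule measurableI)
  fix A :: "(real^'d) set" assume "s \<le> t" "A \<in> sets borel"
  then show "(\<lambda>\<omega>. e1 s (snd \<omega>)) -` A \<inter> space (noise_filt M0 M1 e0 e1 t) \<in> sets (noise_filt M0 M1 e0 e1 t)"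
    unfolding nf_sets nf_space
    by (intro sigma_sets.Basic UN_I[of s]) auto
qed auto

lemma nf_sub:
  fixes e0 :: "nat \<Rightarrow> 'w0 \<Rightarrow> real^'d" and e1 :: "nat \<Rightarrow> 'w1 \<Rightarrow> real^'d"
  assumes sp: "space N0 = space M0" "space N1 = space M1"
    and m0: "\<And>s. s \<le> t \<Longrightarrow> e0 s \<in> borel_measurable N0"
    and m1: "\<And>s. s \<le> t \<Longrightarrow> e1 s \<in> borel_measurable N1"
  shows "sets (noise_filt M0 M1 e0 e1 t) \<subseteq> sets (N0 \<Otimes>\<^sub>M N1)"
proof -
  have sp2: "space (M0 \<Otimes>\<^sub>M M1) = space (N0 \<Otimes>\<^sub>M N1)" using sp by (simp add: space_pair_measure)
  have g0: "(\<lambda>\<omega>. e0 s (fst \<omega>)) -` B \<inter> space (N0 \<Otimes>\<^sub>M N1) \<in> sets (N0 \<Otimes>\<^sub>M N1)"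
    if "s \<le> t" "B \<in> sets (borel :: (real^'d) measure)" for s B
    using that by (intro measurable_sets[OF measurable_compose[OF measurable_fst m0]]) auto
  have g1: "(\<lambda>\<omega>. e1 s (snd \<omega>)) -` B \<inter> space (N0 \<Otimes>\<^sub>M N1) \<in> sets (N0 \<Otimes>\<^sub>M N1)"
    if "s \<le> t" "B \<in> sets (borel :: (real^'d) measure)" for s B
    using that by (intro measurable_sets[OF measurable_compose[OF measurable_snd m1]]) auto
  show ?thesis unfolding nf_sets sp2
    by (rule sets.sigma_sets_subset) (auto intro!: g0 g1)
qed

lemma fub_snd:
  fixes g :: "'b \<Rightarrow> real"
  assumes M0: "prob_space M0" and M1: "prob_space M1"
    and A: "A \<in> sets (N0 \<Otimes>\<^sub>M N1)" and AM: "A \<in> sets (M0 \<Otimes>\<^sub>M M1)"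
    and g: "integrable M1 g"
    and z: "\<And>S. S \<in> sets N1 \<Longrightarrow> (\<integral>y. indicator S y * g y \<partial>M1) = 0"
  shows "(\<integral>\<omega>. indicator A \<omega> * g (snd \<omega>) \<partial>(M0 \<Otimes>\<^sub>M M1)) = 0"
proof -
  interpret P: pair_sigma_finite M0 M1
    by (intro pair_sigma_finite.intro prob_space_imp_sigma_finite M0 M1)
  have i: "integrable (M0 \<Otimes>\<^sub>M M1) (\<lambda>\<omega>. indicator A \<omega> * g (snd \<omega>))"
    using integrable_mult_indicator[OF AM int_snd[OF M0 M1 g]] by simp
  have "(\<integral>\<omega>. indicator A \<omega> * g (snd \<omega>) \<partial>(M0 \<Otimes>\<^sub>M M1))
      = (\<integral>x. (\<integral>y. indicator A (x, y) * g y \<partial>M1) \<partial>M0)"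
    using P.integral_fst'[OF i] by simp
  also have "\<dots> = (\<integral>x. 0 \<partial>M0)"
  proof (rule Bochner_Integration.integral_cong[OF refl])
    fix x
    have "(\<integral>y. indicator A (x, y) * g y \<partial>M1) = (\<integral>y. indicator (Pair x -` A) y * g y \<partial>M1)"
      by (simp add: indicator_def)
    also have "\<dots> = 0" using z sets_Pair1[OF A] by blast
    finally show "(\<integral>y. indicator A (x, y) * g y \<partial>M1) = 0" .
  qed
  finally show ?thesis by simp
qed

lemma fub_fst:
  fixes g :: "'a \<Rightarrow> real"
  assumes M0: "prob_space M0" and M1: "prob_space M1"
    and A: "A \<in> sets (N0 \<Otimes>\<^sub>M N1)" and AM: "A \<in> sets (M0 \<Otimes>\<^sub>M M1)"
    and g: "integrable M0 g"
    and z: "\<And>S. S \<in> sets N0 \<Longrightarrow> (\<integral>y. indicator S y * g y \<partial>M0) = 0"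
  shows "(\<integral>\<omega>. indicator A \<omega> * g (fst \<omega>) \<partial>(M0 \<Otimes>\<^sub>M M1)) = 0"
proof -
  interpret P: pair_sigma_finite M0 M1
    by (intro pair_sigma_finite.intro prob_space_imp_sigma_finite M0 M1)
  have eq: "(\<lambda>\<omega>. indicator A \<omega> * g (fst \<omega>)) = (\<lambda>(x, y). indicator A (x, y) * g x)"
    by auto
  have i: "integrable (M0 \<Otimes>\<^sub>M M1) (\<lambda>\<omega>. indicator A \<omega> * g (fst \<omega>))"
    using integrable_mult_indicator[OF AM int_fst[OF M0 M1 g]] by simp
  have "(\<integral>\<omega>. indicator A \<omega> * g (fst \<omega>) \<partial>(M0 \<Otimes>\<^sub>M M1))
      = (\<integral>y. (\<integral>x. indicator A (x, y) * g x \<partial>M0) \<partial>M1)"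
    using P.integral_snd[of "\<lambda>x y. indicator A (x, y) * g x"] i unfolding eq by simp
  also have "\<dots> = (\<integral>y. 0 \<partial>M1)"
  proof (rule Bochner_Integration.integral_cong[OF refl])
    fix y
    have "(\<integral>x. indicator A (x, y) * g x \<partial>M0) = (\<integral>x. indicator ((\<lambda>x. (x, y)) -` A) x * g x \<partial>M0)"
      by (simp add: indicator_def)
    also have "\<dots> = 0" using z sets_Pair2[OF A] by blast
    finally show "(\<integral>x. indicator A (x, y) * g x \<partial>M0) = 0" .
  qed
  finally show ?thesis by simp
qed



lemma transpose_add': "transpose (A + B) = transpose A + transpose (B :: real^'n^'m)"
  by (simp add: transpose_def vec_eq_iff)

lemma alg_xstep:
  fixes A Abar P Pbar :: "real^'d^'d" and B1 B1bar B2 B2bar :: "real^'l^'d"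
    and G1 L1 G2 L2 :: "real^'d^'l"
  shows "A *v (a + b) + Abar *v a + B1 *v (G1 *v (P *v b) + L1 *v (Pbar *v a)) + B1bar *v (L1 *v (Pbar *v a))
     + B2 *v (G2 *v (P *v b) + L2 *v (Pbar *v a)) + B2bar *v (L2 *v (Pbar *v a)) + e0 + e1
  = (((A + Abar) + ((B1 + B1bar) ** L1 + (B2 + B2bar) ** L2) ** Pbar) *v a + e0)
    + ((A + (B1 ** G1 + B2 ** G2) ** P) *v b + e1)"
  by (simp add: algebra_simps matrix_vector_mul_assoc[symmetric])

lemma alg_eq:
  fixes R1 R1bar :: "real^'l^'l" and B1 B1bar :: "real^'l^'d" and G1 L1 :: "real^'d^'l"
  assumes RG: "R1 ** G1 = k *\<^sub>R transpose B1" and RL: "(R1 + R1bar) ** L1 = k *\<^sub>R transpose (B1 + B1bar)"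
  shows "transpose B1 *v (v + w) + c *\<^sub>R (R1 *v (G1 *v v + L1 *v w)) + transpose B1bar *v w
     + c *\<^sub>R (R1bar *v (L1 *v w)) = (1 + c * k) *\<^sub>R (transpose B1 *v (v + w) + transpose B1bar *v w)"
proof -
  have h1: "R1 *v (G1 *v v) = k *\<^sub>R (transpose B1 *v v)"
    using RG by (metis matrix_vector_mul_assoc scaleR_matrix_vector_assoc)
  have h2: "R1 *v (L1 *v w) + R1bar *v (L1 *v w) = k *\<^sub>R (transpose B1 *v w + transpose B1bar *v w)"
  proof -
    have "R1 *v (L1 *v w) + R1bar *v (L1 *v w) = ((R1 + R1bar) ** L1) *v w"
      by (simp add: matrix_vector_mul_assoc[symmetric] algebra_simps)
    also have "\<dots> = k *\<^sub>R (transpose B1 *v w + transpose B1bar *v w)"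
      unfolding RL transpose_add' by (simp add: scaleR_matrix_vector_assoc[symmetric] algebra_simps)
    finally show ?thesis .
  qed
  have "c *\<^sub>R (R1 *v (G1 *v v + L1 *v w)) + c *\<^sub>R (R1bar *v (L1 *v w))
     = c *\<^sub>R (R1 *v (G1 *v v)) + c *\<^sub>R (R1 *v (L1 *v w) + R1bar *v (L1 *v w))"
    by (simp add: algebra_simps)
  also have "\<dots> = c *\<^sub>R (k *\<^sub>R (transpose B1 *v v)) + c *\<^sub>R (k *\<^sub>R (transpose B1 *v w + transpose B1bar *v w))"
    unfolding h1 h2 ..
  finally have e: "c *\<^sub>R (R1 *v (G1 *v v + L1 *v w)) + c *\<^sub>R (R1bar *v (L1 *v w)) = \<dots>" .
  have "transpose B1 *v (v + w) + c *\<^sub>R (R1 *v (G1 *v v + L1 *v w)) + transpose B1bar *v w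
     + c *\<^sub>R (R1bar *v (L1 *v w)) = transpose B1 *v (v + w) + transpose B1bar *v w +
       (c *\<^sub>R (R1 *v (G1 *v v + L1 *v w)) + c *\<^sub>R (R1bar *v (L1 *v w)))"
    by (simp add: algebra_simps)
  also have "\<dots> = (1 + c * k) *\<^sub>R (transpose B1 *v (v + w) + transpose B1bar *v w)"
    unfolding e by (simp add: algebra_simps)
  finally show ?thesis .
qed



lemma alg_Z:
  fixes A Abar P Pbar Q Qbar My Mz K1 K2 :: "real^'d^'d"
  assumes K1: "K1 = transpose A ** P + 2 *\<^sub>R Q"
    and K2: "K2 = transpose (A + Abar) ** Pbar + 2 *\<^sub>R (Q + Qbar)"
    and r1: "K1 ** My = g *\<^sub>R P" and r2: "K2 ** Mz = g *\<^sub>R Pbar"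
  shows "transpose A *v (P *v (My *v b + e1) + Pbar *v (Mz *v a + e0)) + 2 *\<^sub>R (Q *v ((Mz *v a + e0) + (My *v b + e1)))
     + transpose Abar *v (Pbar *v (Mz *v a + e0)) + 2 *\<^sub>R (Qbar *v (Mz *v a + e0))
   = g *\<^sub>R (P *v b + Pbar *v a) + K1 *v e1 + K2 *v e0"
proof -
  have "transpose A *v (P *v (My *v b + e1) + Pbar *v (Mz *v a + e0)) + 2 *\<^sub>R (Q *v ((Mz *v a + e0) + (My *v b + e1)))
     + transpose Abar *v (Pbar *v (Mz *v a + e0)) + 2 *\<^sub>R (Qbar *v (Mz *v a + e0))
     = K1 *v (My *v b + e1) + K2 *v (Mz *v a + e0)"
    unfolding K1 K2 transpose_add'
    by (simp add: algebra_simps matrix_vector_mul_assoc[symmetric] scaleR_matrix_vector_assoc[symmetric])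
  also have "\<dots> = (K1 ** My) *v b + K1 *v e1 + ((K2 ** Mz) *v a + K2 *v e0)"
    by (simp add: algebra_simps matrix_vector_mul_assoc[symmetric])
  also have "\<dots> = g *\<^sub>R (P *v b + Pbar *v a) + K1 *v e1 + K2 *v e0"
    unfolding r1 r2 by (simp add: algebra_simps scaleR_matrix_vector_assoc[symmetric])
  finally show ?thesis .
qed



lemma int_lin0:
  fixes K :: "real^'n^'m" and f :: "'a \<Rightarrow> real^'n"
  assumes PM: "prob_space M" and f: "integrable M f" and z: "(LINT w|M. f w) = 0"
  shows "(LINT w|M. v + K *v f w) = v"
proof -
  interpret prob_space M by (rule PM)
  have "(LINT w|M. v + K *v f w) = (LINT w|M. v) + (LINT w|M. K *v f w)"
    by (rule Bochner_Integration.integral_add)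
       (auto intro: integrable_bounded_linear[OF matrix_vector_mul_bounded_linear f])
  also have "\<dots> = v + K *v (LINT w|M. f w)"
    using integral_bounded_linear[OF matrix_vector_mul_bounded_linear f, of K] by (simp add: prob_space)
  finally show ?thesis using z by simp
qed

theorem mainTheorem4:
  fixes M0 :: "'w0 measure" and M1 :: "'w1 measure"
    and e0 :: "nat \<Rightarrow> 'w0 \<Rightarrow> real^'d" and e1 :: "nat \<Rightarrow> 'w1 \<Rightarrow> real^'d"
    and \<gamma> :: real
    and A Abar Q Qbar P Pbar :: "real^'d^'d"
    and B1 B1bar B2 B2bar :: "real^'l^'d"
    and R1 R1bar R2 R2bar :: "real^'l^'l"
    and x :: "nat \<Rightarrow> 'w0 \<times> 'w1 \<Rightarrow> real^'d"
    and u1 u2 :: "nat \<Rightarrow> 'w0 \<times> 'w1 \<Rightarrow> real^'l"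
    and p :: "nat \<Rightarrow> 'w0 \<times> 'w1 \<Rightarrow> real^'d"
  assumes M0: "prob_space M0" and M1: "prob_space M1"
    and noise0: "noise_seq M0 e0" and noise1: "noise_seq M1 e1"
    and \<gamma>: "0 < \<gamma>" "\<gamma> \<le> 1"
    and symQ: "symmetric_mat Q" and symQbar: "symmetric_mat Qbar"
    and R1: "pos_def_mat R1" and R1bar: "symmetric_mat R1bar" and R1R1bar: "pos_def_mat (R1 + R1bar)"
    and R2: "pos_def_mat R2" and R2bar: "symmetric_mat R2bar" and R2R2bar: "pos_def_mat (R2 + R2bar)"
    and symP: "symmetric_mat P" and symPbar: "symmetric_mat Pbar"
    and ricP: "\<gamma> *\<^sub>R ((transpose A ** P + 2 *\<^sub>R Q)
                 ** (A + (B1 ** gain 1 R1 B1 + B2 ** gain 2 R2 B2) ** P)) = P"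
    and ricPbar: "\<gamma> *\<^sub>R ((transpose (A + Abar) ** Pbar + 2 *\<^sub>R (Q + Qbar))
                 ** ((A + Abar) + ((B1 + B1bar) ** gain 1 (R1 + R1bar) (B1 + B1bar)
                                   + (B2 + B2bar) ** gain 2 (R2 + R2bar) (B2 + B2bar)) ** Pbar)) = Pbar"
    and u1_def: "\<And>t \<omega>. u1 t \<omega> = gain 1 R1 B1 *v (P *v (x t \<omega> - cbar M1 (x t) \<omega>))
                             + gain 1 (R1 + R1bar) (B1 + B1bar) *v (Pbar *v cbar M1 (x t) \<omega>)"
    and u2_def: "\<And>t \<omega>. u2 t \<omega> = gain 2 R2 B2 *v (P *v (x t \<omega> - cbar M1 (x t) \<omega>))
                             + gain 2 (R2 + R2bar) (B2 + B2bar) *v (Pbar *v cbar M1 (x t) \<omega>)"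
    and x0: "\<And>\<omega>. \<omega> \<in> space (M0 \<Otimes>\<^sub>M M1) \<Longrightarrow> x 0 \<omega> = e0 0 (fst \<omega>) + e1 0 (snd \<omega>)"
    and xSuc: "\<And>t \<omega>. \<omega> \<in> space (M0 \<Otimes>\<^sub>M M1) \<Longrightarrow>
       x (Suc t) \<omega> = A *v x t \<omega> + Abar *v cbar M1 (x t) \<omega>
                     + B1 *v u1 t \<omega> + B1bar *v cbar M1 (u1 t) \<omega>
                     + B2 *v u2 t \<omega> + B2bar *v cbar M1 (u2 t) \<omega>
                     + e0 (Suc t) (fst \<omega>) + e1 (Suc t) (snd \<omega>)"
    and p_def: "\<And>t \<omega>. p t \<omega> = P *v (x t \<omega> - cbar M1 (x t) \<omega>) + Pbar *v cbar M1 (x t) \<omega>"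
  shows "adjoint_process M0 M1 e0 e1 \<gamma> A Abar Q Qbar x p
    \<and> (\<forall>t. AE \<omega> in (M0 \<Otimes>\<^sub>M M1).
          transpose B1 *v p t \<omega> + 2 *\<^sub>R (R1 *v u1 t \<omega>)
          + transpose B1bar *v cbar M1 (p t) \<omega> + 2 *\<^sub>R (R1bar *v cbar M1 (u1 t) \<omega>) = 0)
    \<and> (\<forall>t. AE \<omega> in (M0 \<Otimes>\<^sub>M M1).
          transpose B2 *v p t \<omega> - 2 *\<^sub>R (R2 *v u2 t \<omega>)
          + transpose B2bar *v cbar M1 (p t) \<omega> - 2 *\<^sub>R (R2bar *v cbar M1 (u2 t) \<omega>) = 0)"
proof -
  interpret M0: prob_space M0 by (rule M0)
  interpret M1: prob_space M1 by (rule M1)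
  interpret PS: pair_sigma_finite M0 M1
    by (intro pair_sigma_finite.intro prob_space_imp_sigma_finite M0 M1)
  have pMM: "prob_space (M0 \<Otimes>\<^sub>M M1)" by (rule prob_space_pair[OF M0 M1])
  have e0m: "\<And>t. e0 t \<in> borel_measurable M0" and e0i: "\<And>t. integrable M0 (e0 t)"
    and e0z: "\<And>t. t \<ge> 1 \<Longrightarrow> (LINT w|M0. e0 t w) = 0"
    using noise0 unfolding noise_seq_def by auto
  have e1m: "\<And>t. e1 t \<in> borel_measurable M1" and e1i: "\<And>t. integrable M1 (e1 t)"
    and e1z: "\<And>t. t \<ge> 1 \<Longrightarrow> (LINT w|M1. e1 t w) = 0"
    using noise1 unfolding noise_seq_def by auto
  define G1 where "G1 = gain 1 R1 B1"
  define G2 where "G2 = gain 2 R2 B2"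
  define L1 where "L1 = gain 1 (R1 + R1bar) (B1 + B1bar)"
  define L2 where "L2 = gain 2 (R2 + R2bar) (B2 + B2bar)"
  define My where "My = A + (B1 ** G1 + B2 ** G2) ** P"
  define Mz where "Mz = (A + Abar) + ((B1 + B1bar) ** L1 + (B2 + B2bar) ** L2) ** Pbar"
  define a where "a = seqf Mz e0 (LINT w|M1. e1 0 w)"
  define b where "b = seqf My e1 (- (LINT w|M1. e1 0 w))"
  have aS: "a (Suc t) w = Mz *v a t w + e0 (Suc t) w" for t w unfolding a_def by simp
  have bS: "b (Suc t) w = My *v b t w + e1 (Suc t) w" for t w unfolding b_def by simp
  have aint: "\<And>t. integrable M0 (a t)" unfolding a_def using seq_int e0i M0 by blast
  have bint: "\<And>t. integrable M1 (b t)" unfolding b_def using seq_int e1i M1 by blast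
  have bz: "\<And>t. (LINT w|M1. b t w) = 0" unfolding b_def
    by (rule seq_int0[OF e1i M1 e1z refl])
  have sp: "\<And>\<omega> w. \<omega> \<in> space (M0 \<Otimes>\<^sub>M M1) \<Longrightarrow> w \<in> space M1 \<Longrightarrow> (fst \<omega>, w) \<in> space (M0 \<Otimes>\<^sub>M M1)"
    by (auto simp: space_pair_measure)
  have cbx: "cbar M1 (x t) \<omega> = a t (fst \<omega>)"
    if xr: "\<forall>\<omega>\<in>space (M0 \<Otimes>\<^sub>M M1). x t \<omega> = a t (fst \<omega>) + b t (snd \<omega>)"
      and \<omega>: "\<omega> \<in> space (M0 \<Otimes>\<^sub>M M1)" for t \<omega>
  proof -
    have "cbar M1 (x t) \<omega> = (LINT w|M1. a t (fst \<omega>) + mat 1 *v b t w)"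
      unfolding cbar_def using xr sp[OF \<omega>] by (intro Bochner_Integration.integral_cong) auto
    also have "\<dots> = a t (fst \<omega>)" by (rule int_lin0[OF M1 bint bz])
    finally show ?thesis .
  qed
  have u1e: "u1 t \<omega> = G1 *v (P *v b t (snd \<omega>)) + L1 *v (Pbar *v a t (fst \<omega>))"
    if xr: "\<forall>\<omega>\<in>space (M0 \<Otimes>\<^sub>M M1). x t \<omega> = a t (fst \<omega>) + b t (snd \<omega>)"
      and \<omega>: "\<omega> \<in> space (M0 \<Otimes>\<^sub>M M1)" for t \<omega>
    using u1_def[of t \<omega>] xr \<omega> cbx[OF xr \<omega>] unfolding G1_def L1_def by simp
  have u2e: "u2 t \<omega> = G2 *v (P *v b t (snd \<omega>)) + L2 *v (Pbar *v a t (fst \<omega>))"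
    if xr: "\<forall>\<omega>\<in>space (M0 \<Otimes>\<^sub>M M1). x t \<omega> = a t (fst \<omega>) + b t (snd \<omega>)"
      and \<omega>: "\<omega> \<in> space (M0 \<Otimes>\<^sub>M M1)" for t \<omega>
    using u2_def[of t \<omega>] xr \<omega> cbx[OF xr \<omega>] unfolding G2_def L2_def by simp
  have cu1: "cbar M1 (u1 t) \<omega> = L1 *v (Pbar *v a t (fst \<omega>))"
    if xr: "\<forall>\<omega>\<in>space (M0 \<Otimes>\<^sub>M M1). x t \<omega> = a t (fst \<omega>) + b t (snd \<omega>)"
      and \<omega>: "\<omega> \<in> space (M0 \<Otimes>\<^sub>M M1)" for t \<omega>
  proof -
    have "cbar M1 (u1 t) \<omega> = (LINT w|M1. L1 *v (Pbar *v a t (fst \<omega>)) + (G1 ** P) *v b t w)"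
      unfolding cbar_def using u1e[OF xr sp[OF \<omega>]]
      by (intro Bochner_Integration.integral_cong) (auto simp: matrix_vector_mul_assoc)
    also have "\<dots> = L1 *v (Pbar *v a t (fst \<omega>))" by (rule int_lin0[OF M1 bint bz])
    finally show ?thesis .
  qed
  have cu2: "cbar M1 (u2 t) \<omega> = L2 *v (Pbar *v a t (fst \<omega>))"
    if xr: "\<forall>\<omega>\<in>space (M0 \<Otimes>\<^sub>M M1). x t \<omega> = a t (fst \<omega>) + b t (snd \<omega>)"
      and \<omega>: "\<omega> \<in> space (M0 \<Otimes>\<^sub>M M1)" for t \<omega>
  proof -
    have "cbar M1 (u2 t) \<omega> = (LINT w|M1. L2 *v (Pbar *v a t (fst \<omega>)) + (G2 ** P) *v b t w)"
      unfolding cbar_def using u2e[OF xr sp[OF \<omega>]]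
      by (intro Bochner_Integration.integral_cong) (auto simp: matrix_vector_mul_assoc)
    also have "\<dots> = L2 *v (Pbar *v a t (fst \<omega>))" by (rule int_lin0[OF M1 bint bz])
    finally show ?thesis .
  qed
  have xrep: "\<forall>\<omega>\<in>space (M0 \<Otimes>\<^sub>M M1). x t \<omega> = a t (fst \<omega>) + b t (snd \<omega>)" for t
  proof (induction t)
    case 0
    then show ?case using x0 by (simp add: a_def b_def algebra_simps)
  next
    case (Suc t)
    show ?case
    proof
      fix \<omega> assume \<omega>: "\<omega> \<in> space (M0 \<Otimes>\<^sub>M M1)"
      have "x (Suc t) \<omega> = A *v (a t (fst \<omega>) + b t (snd \<omega>)) + Abar *v a t (fst \<omega>)
        + B1 *v (G1 *v (P *v b t (snd \<omega>)) + L1 *v (Pbar *v a t (fst \<omega>))) + B1bar *v (L1 *v (Pbar *v a t (fst \<omega>)))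
        + B2 *v (G2 *v (P *v b t (snd \<omega>)) + L2 *v (Pbar *v a t (fst \<omega>))) + B2bar *v (L2 *v (Pbar *v a t (fst \<omega>)))
        + e0 (Suc t) (fst \<omega>) + e1 (Suc t) (snd \<omega>)"
        using xSuc[OF \<omega>] Suc.IH[rule_format, OF \<omega>] cbx[OF Suc.IH \<omega>] u1e[OF Suc.IH \<omega>] cu1[OF Suc.IH \<omega>]
          u2e[OF Suc.IH \<omega>] cu2[OF Suc.IH \<omega>] by simp
      also have "\<dots> = (Mz *v a t (fst \<omega>) + e0 (Suc t) (fst \<omega>)) + (My *v b t (snd \<omega>) + e1 (Suc t) (snd \<omega>))"
        unfolding Mz_def My_def by (rule alg_xstep)
      finally show "x (Suc t) \<omega> = a (Suc t) (fst \<omega>) + b (Suc t) (snd \<omega>)" by (simp add: aS bS)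
    qed
  qed
  have pe: "p t \<omega> = P *v b t (snd \<omega>) + Pbar *v a t (fst \<omega>)" if "\<omega> \<in> space (M0 \<Otimes>\<^sub>M M1)" for t \<omega>
    using p_def[of t \<omega>] xrep[of t] that cbx[OF xrep that] by simp
  have cp: "cbar M1 (p t) \<omega> = Pbar *v a t (fst \<omega>)" if \<omega>: "\<omega> \<in> space (M0 \<Otimes>\<^sub>M M1)" for t \<omega>
  proof -
    have "cbar M1 (p t) \<omega> = (LINT w|M1. Pbar *v a t (fst \<omega>) + P *v b t w)"
      unfolding cbar_def using pe sp[OF \<omega>]
      by (intro Bochner_Integration.integral_cong) auto
    also have "\<dots> = Pbar *v a t (fst \<omega>)" by (rule int_lin0[OF M1 bint bz])
    finally show ?thesis .
  qed
  have RG1: "R1 ** G1 = (-1/2) *\<^sub>R transpose B1" unfolding G1_def using gain_mul[OF R1, of 1 B1] by simp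
  have RL1: "(R1 + R1bar) ** L1 = (-1/2) *\<^sub>R transpose (B1 + B1bar)"
    unfolding L1_def using gain_mul[OF R1R1bar, of 1 "B1 + B1bar"] by simp
  have RG2: "R2 ** G2 = (1/2) *\<^sub>R transpose B2" unfolding G2_def using gain_mul[OF R2, of 2 B2] by simp
  have RL2: "(R2 + R2bar) ** L2 = (1/2) *\<^sub>R transpose (B2 + B2bar)"
    unfolding L2_def using gain_mul[OF R2R2bar, of 2 "B2 + B2bar"] by simp
  have EQ1: "\<forall>t. AE \<omega> in (M0 \<Otimes>\<^sub>M M1).
          transpose B1 *v p t \<omega> + 2 *\<^sub>R (R1 *v u1 t \<omega>)
          + transpose B1bar *v cbar M1 (p t) \<omega> + 2 *\<^sub>R (R1bar *v cbar M1 (u1 t) \<omega>) = 0"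
  proof (intro allI AE_I2)
    fix t \<omega> assume \<omega>: "\<omega> \<in> space (M0 \<Otimes>\<^sub>M M1)"
    show "transpose B1 *v p t \<omega> + 2 *\<^sub>R (R1 *v u1 t \<omega>)
          + transpose B1bar *v cbar M1 (p t) \<omega> + 2 *\<^sub>R (R1bar *v cbar M1 (u1 t) \<omega>) = 0"
      using alg_eq[OF RG1 RL1, of "P *v b t (snd \<omega>)" "Pbar *v a t (fst \<omega>)" 2]
        pe[OF \<omega>] cp[OF \<omega>] u1e[OF xrep \<omega>] cu1[OF xrep \<omega>] by simp
  qed
  have EQ2: "\<forall>t. AE \<omega> in (M0 \<Otimes>\<^sub>M M1).
          transpose B2 *v p t \<omega> - 2 *\<^sub>R (R2 *v u2 t \<omega>)
          + transpose B2bar *v cbar M1 (p t) \<omega> - 2 *\<^sub>R (R2bar *v cbar M1 (u2 t) \<omega>) = 0"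
  proof (intro allI AE_I2)
    fix t \<omega> assume \<omega>: "\<omega> \<in> space (M0 \<Otimes>\<^sub>M M1)"
    show "transpose B2 *v p t \<omega> - 2 *\<^sub>R (R2 *v u2 t \<omega>)
          + transpose B2bar *v cbar M1 (p t) \<omega> - 2 *\<^sub>R (R2bar *v cbar M1 (u2 t) \<omega>) = 0"
      using alg_eq[OF RG2 RL2, of "P *v b t (snd \<omega>)" "Pbar *v a t (fst \<omega>)" "-2"]
        pe[OF \<omega>] cp[OF \<omega>] u2e[OF xrep \<omega>] cu2[OF xrep \<omega>] by simp
  qed
  have ADJ: "adjoint_process M0 M1 e0 e1 \<gamma> A Abar Q Qbar x p"
  proof -
    define F where "F t = noise_filt M0 M1 e0 e1 t" for t
    have Fsp: "space (F t) = space (M0 \<Otimes>\<^sub>M M1)" for t unfolding F_def by (rule nf_space)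
    have aF: "s \<le> t \<Longrightarrow> (\<lambda>\<omega>. a s (fst \<omega>)) \<in> borel_measurable (F t)" for s t
    proof (induction s)
      case 0
      then show ?case unfolding F_def a_def
        by (simp, intro borel_measurable_add nf_meas0 measurable_const) auto
    next
      case (Suc s)
      then show ?case unfolding F_def aS
        by (intro borel_measurable_add mv_meas nf_meas0) (auto simp: F_def)
    qed
    have bF: "s \<le> t \<Longrightarrow> (\<lambda>\<omega>. b s (snd \<omega>)) \<in> borel_measurable (F t)" for s t
    proof (induction s)
      case 0
      then show ?case unfolding F_def b_def
        by (simp, intro borel_measurable_diff nf_meas1 measurable_const) auto
    next
      case (Suc s)
      then show ?case unfolding F_def bS
        by (intro borel_measurable_add mv_meas nf_meas1) (auto simp: F_def)
    qed
    have VF: "(\<lambda>\<omega>. P *v b t (snd \<omega>) + Pbar *v a t (fst \<omega>)) \<in> borel_measurable (F t)" for t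
      by (intro borel_measurable_add mv_meas aF bF) auto
    have pF: "p t \<in> borel_measurable (F t)" for t
    proof -
      have "p t \<in> borel_measurable (F t) \<longleftrightarrow> (\<lambda>\<omega>. P *v b t (snd \<omega>) + Pbar *v a t (fst \<omega>)) \<in> borel_measurable (F t)"
        by (rule measurable_cong) (simp add: Fsp pe)
      then show ?thesis using VF by simp
    qed
    have subF: "sets (F t) \<subseteq> sets (M0 \<Otimes>\<^sub>M M1)" for t
      unfolding F_def by (rule nf_sub) (auto simp: e0m e1m)
    have subG: "sets (F t) \<subseteq> sets (gsig M0 e0 t \<Otimes>\<^sub>M gsig M1 e1 t)" for t
      unfolding F_def by (rule nf_sub) (auto simp: gsig_space gsig_meas)
    define K1 where "K1 = transpose A ** P + 2 *\<^sub>R Q"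
    define K2 where "K2 = transpose (A + Abar) ** Pbar + 2 *\<^sub>R (Q + Qbar)"
    have r1: "K1 ** My = (1/\<gamma>) *\<^sub>R P"
    proof -
      have e: "\<gamma> *\<^sub>R (K1 ** My) = P" using ricP unfolding K1_def My_def G1_def G2_def .
      have "(1/\<gamma>) *\<^sub>R P = (1/\<gamma>) *\<^sub>R (\<gamma> *\<^sub>R (K1 ** My))" unfolding e ..
      with \<gamma> show ?thesis by simp
    qed
    have r2: "K2 ** Mz = (1/\<gamma>) *\<^sub>R Pbar"
    proof -
      have e: "\<gamma> *\<^sub>R (K2 ** Mz) = Pbar" using ricPbar unfolding K2_def Mz_def L1_def L2_def .
      have "(1/\<gamma>) *\<^sub>R Pbar = (1/\<gamma>) *\<^sub>R (\<gamma> *\<^sub>R (K2 ** Mz))" unfolding e ..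
      with \<gamma> show ?thesis by simp
    qed
    have CE: "AE \<omega> in (M0 \<Otimes>\<^sub>M M1). p t \<omega> = \<gamma> *\<^sub>R vcond_exp (M0 \<Otimes>\<^sub>M M1) (F t)
          (\<lambda>\<eta>. transpose A *v p (Suc t) \<eta> + 2 *\<^sub>R (Q *v x (Suc t) \<eta>)
               + transpose Abar *v cbar M1 (p (Suc t)) \<eta> + 2 *\<^sub>R (Qbar *v cbar M1 (x (Suc t)) \<eta>)) \<omega>" for t
    proof -
      define Z where "Z = (\<lambda>\<eta>. transpose A *v p (Suc t) \<eta> + 2 *\<^sub>R (Q *v x (Suc t) \<eta>)
               + transpose Abar *v cbar M1 (p (Suc t)) \<eta> + 2 *\<^sub>R (Qbar *v cbar M1 (x (Suc t)) \<eta>))"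
      define V where "V = (\<lambda>\<omega>. (1/\<gamma>) *\<^sub>R (P *v b t (snd \<omega>) + Pbar *v a t (fst \<omega>)))"
      have Zeq: "Z \<omega> = V \<omega> + K1 *v e1 (Suc t) (snd \<omega>) + K2 *v e0 (Suc t) (fst \<omega>)"
        if \<omega>: "\<omega> \<in> space (M0 \<Otimes>\<^sub>M M1)" for \<omega>
        unfolding Z_def V_def
        using alg_Z[OF K1_def K2_def r1 r2, of "b t (snd \<omega>)" "e1 (Suc t) (snd \<omega>)" "a t (fst \<omega>)" "e0 (Suc t) (fst \<omega>)"]
          pe[OF \<omega>, of "Suc t"] cp[OF \<omega>, of "Suc t"] xrep[of "Suc t"] \<omega> cbx[OF xrep \<omega>, of "Suc t"]
        by (simp add: aS bS)
      have fsubalg: "finite_measure_subalgebra (M0 \<Otimes>\<^sub>M M1) (F t)"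
        unfolding finite_measure_subalgebra_def finite_measure_subalgebra_axioms_def subalgebra_def
        using pMM subF[of t] Fsp[of t] by (auto simp: prob_space_def)
      interpret S: sigma_finite_subalgebra "M0 \<Otimes>\<^sub>M M1" "F t"
        by (rule finite_measure_subalgebra_is_sigma_finite[OF fsubalg])
      have subalgF: "subalgebra (M0 \<Otimes>\<^sub>M M1) (F t)" using subF[of t] Fsp[of t] by (simp add: subalgebra_def)
      have Vint: "integrable (M0 \<Otimes>\<^sub>M M1) V"
        unfolding V_def
        by (intro integrable_scaleR_right Bochner_Integration.integrable_add
              integrable_bounded_linear[OF matrix_vector_mul_bounded_linear int_snd[OF M0 M1 bint]]
              integrable_bounded_linear[OF matrix_vector_mul_bounded_linear int_fst[OF M0 M1 aint]])
      have VFm: "V \<in> borel_measurable (F t)"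
        unfolding V_def by (intro borel_measurable_scaleR borel_measurable_const VF)
      have comp: "\<forall>i\<in>UNIV. AE \<omega> in (M0 \<Otimes>\<^sub>M M1).
          real_cond_exp (M0 \<Otimes>\<^sub>M M1) (F t) (\<lambda>\<eta>. Z \<eta> $ i) \<omega> = V \<omega> $ i"
      proof
        fix i :: 'd
        define f1 where "f1 = (\<lambda>\<omega>. V \<omega> $ i)"
        define h1 where "h1 = (\<lambda>v. (K1 *v v) $ i)"
        define h2 where "h2 = (\<lambda>v. (K2 *v v) $ i)"
        have bh1: "bounded_linear h1" unfolding h1_def
          by (rule bounded_linear_compose[OF bounded_linear_vec_nth matrix_vector_mul_bounded_linear])
        have bh2: "bounded_linear h2" unfolding h2_def
          by (rule bounded_linear_compose[OF bounded_linear_vec_nth matrix_vector_mul_bounded_linear])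
        define f2 where "f2 = (\<lambda>\<omega>::'w0 \<times> 'w1. h1 (e1 (Suc t) (snd \<omega>)))"
        define f3 where "f3 = (\<lambda>\<omega>::'w0 \<times> 'w1. h2 (e0 (Suc t) (fst \<omega>)))"
        have i1: "integrable (M0 \<Otimes>\<^sub>M M1) f1" unfolding f1_def
          by (rule integrable_bounded_linear[OF bounded_linear_vec_nth Vint])
        have i2: "integrable (M0 \<Otimes>\<^sub>M M1) f2" unfolding f2_def
          by (rule int_snd[OF M0 M1 integrable_bounded_linear[OF bh1 e1i]])
        have i3: "integrable (M0 \<Otimes>\<^sub>M M1) f3" unfolding f3_def
          by (rule int_fst[OF M0 M1 integrable_bounded_linear[OF bh2 e0i]])
        have m1F: "f1 \<in> borel_measurable (F t)" unfolding f1_def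
          by (rule bl_meas[OF bounded_linear_vec_nth VFm])
        have Zi: "\<And>\<omega>. \<omega> \<in> space (M0 \<Otimes>\<^sub>M M1) \<Longrightarrow> Z \<omega> $ i = f1 \<omega> + f2 \<omega> + f3 \<omega>"
          using Zeq unfolding f1_def f2_def f3_def h1_def h2_def by simp
        have mS: "(\<lambda>\<eta>. f1 \<eta> + f2 \<eta> + f3 \<eta>) \<in> borel_measurable (M0 \<Otimes>\<^sub>M M1)"
          by (intro borel_measurable_add borel_measurable_integrable i1 i2 i3)
        have mZ: "(\<lambda>\<eta>. Z \<eta> $ i) \<in> borel_measurable (M0 \<Otimes>\<^sub>M M1)"
        proof -
          have "(\<lambda>\<eta>. Z \<eta> $ i) \<in> borel_measurable (M0 \<Otimes>\<^sub>M M1) \<longleftrightarrow> (\<lambda>\<eta>. f1 \<eta> + f2 \<eta> + f3 \<eta>) \<in> borel_measurable (M0 \<Otimes>\<^sub>M M1)"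
            by (rule measurable_cong) (simp add: Zi)
          moreover have "(\<lambda>\<eta>. f1 \<eta> + f2 \<eta> + f3 \<eta>) \<in> borel_measurable (M0 \<Otimes>\<^sub>M M1)"
            by (intro borel_measurable_add borel_measurable_integrable i1 i2 i3)
          ultimately show ?thesis by blast
        qed
        have A1: "AE \<omega> in (M0 \<Otimes>\<^sub>M M1). real_cond_exp (M0 \<Otimes>\<^sub>M M1) (F t) (\<lambda>\<eta>. Z \<eta> $ i) \<omega>
              = real_cond_exp (M0 \<Otimes>\<^sub>M M1) (F t) (\<lambda>\<eta>. (f1 \<eta> + f2 \<eta>) + f3 \<eta>) \<omega>"
          by (rule S.real_cond_exp_cong) (auto simp: Zi mZ mS)
        have A2: "AE \<omega> in (M0 \<Otimes>\<^sub>M M1). real_cond_exp (M0 \<Otimes>\<^sub>M M1) (F t) (\<lambda>\<eta>. (f1 \<eta> + f2 \<eta>) + f3 \<eta>) \<omega>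
              = real_cond_exp (M0 \<Otimes>\<^sub>M M1) (F t) (\<lambda>\<eta>. f1 \<eta> + f2 \<eta>) \<omega> + real_cond_exp (M0 \<Otimes>\<^sub>M M1) (F t) f3 \<omega>"
          by (rule S.real_cond_exp_add) (auto simp: i1 i2 i3)
        have A3: "AE \<omega> in (M0 \<Otimes>\<^sub>M M1). real_cond_exp (M0 \<Otimes>\<^sub>M M1) (F t) (\<lambda>\<eta>. f1 \<eta> + f2 \<eta>) \<omega>
              = real_cond_exp (M0 \<Otimes>\<^sub>M M1) (F t) f1 \<omega> + real_cond_exp (M0 \<Otimes>\<^sub>M M1) (F t) f2 \<omega>"
          by (rule S.real_cond_exp_add) (auto simp: i1 i2)
        have A4: "AE \<omega> in (M0 \<Otimes>\<^sub>M M1). real_cond_exp (M0 \<Otimes>\<^sub>M M1) (F t) f1 \<omega> = f1 \<omega>"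
          by (rule S.real_cond_exp_F_meas[OF i1 m1F])
        have A5: "AE \<omega> in (M0 \<Otimes>\<^sub>M M1). real_cond_exp (M0 \<Otimes>\<^sub>M M1) (F t) f2 \<omega> = (\<lambda>_. 0) \<omega>"
        proof (rule S.real_cond_exp_charact)
          fix A assume A: "A \<in> sets (F t)"
          have "(\<integral>\<omega>. indicator A \<omega> * h1 (e1 (Suc t) (snd \<omega>)) \<partial>(M0 \<Otimes>\<^sub>M M1)) = 0"
          proof (rule fub_snd[OF M0 M1])
            show "A \<in> sets (gsig M0 e0 t \<Otimes>\<^sub>M gsig M1 e1 t)" using A subG by blast
            show "A \<in> sets (M0 \<Otimes>\<^sub>M M1)" using A subF by blast
            show "integrable M1 (\<lambda>y. h1 (e1 (Suc t) y))" by (rule integrable_bounded_linear[OF bh1 e1i])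
            show "(\<integral>y. indicator S y * h1 (e1 (Suc t) y) \<partial>M1) = 0" if "S \<in> sets (gsig M1 e1 t)" for S
              using that unfolding gsig_sets by (rule indep_zero[OF M1 noise1 _ bh1])
          qed
          then show "set_lebesgue_integral (M0 \<Otimes>\<^sub>M M1) A f2 = set_lebesgue_integral (M0 \<Otimes>\<^sub>M M1) A (\<lambda>_. 0)"
            unfolding set_lebesgue_integral_def f2_def by simp
        qed (auto simp: i2)
        have A6: "AE \<omega> in (M0 \<Otimes>\<^sub>M M1). real_cond_exp (M0 \<Otimes>\<^sub>M M1) (F t) f3 \<omega> = (\<lambda>_. 0) \<omega>"
        proof (rule S.real_cond_exp_charact)
          fix A assume A: "A \<in> sets (F t)"
          have "(\<integral>\<omega>. indicator A \<omega> * h2 (e0 (Suc t) (fst \<omega>)) \<partial>(M0 \<Otimes>\<^sub>M M1)) = 0"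
          proof (rule fub_fst[OF M0 M1])
            show "A \<in> sets (gsig M0 e0 t \<Otimes>\<^sub>M gsig M1 e1 t)" using A subG by blast
            show "A \<in> sets (M0 \<Otimes>\<^sub>M M1)" using A subF by blast
            show "integrable M0 (\<lambda>y. h2 (e0 (Suc t) y))" by (rule integrable_bounded_linear[OF bh2 e0i])
            show "(\<integral>y. indicator S y * h2 (e0 (Suc t) y) \<partial>M0) = 0" if "S \<in> sets (gsig M0 e0 t)" for S
              using that unfolding gsig_sets by (rule indep_zero[OF M0 noise0 _ bh2])
          qed
          then show "set_lebesgue_integral (M0 \<Otimes>\<^sub>M M1) A f3 = set_lebesgue_integral (M0 \<Otimes>\<^sub>M M1) A (\<lambda>_. 0)"
            unfolding set_lebesgue_integral_def f3_def by simp
        qed (auto simp: i3)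
        show "AE \<omega> in (M0 \<Otimes>\<^sub>M M1). real_cond_exp (M0 \<Otimes>\<^sub>M M1) (F t) (\<lambda>\<eta>. Z \<eta> $ i) \<omega> = V \<omega> $ i"
          using A1 A2 A3 A4 A5 A6 unfolding f1_def by eventually_elim simp
      qed
      have "AE \<omega> in (M0 \<Otimes>\<^sub>M M1). \<forall>i\<in>UNIV.
          real_cond_exp (M0 \<Otimes>\<^sub>M M1) (F t) (\<lambda>\<eta>. Z \<eta> $ i) \<omega> = V \<omega> $ i"
        by (rule AE_finite_allI) (use comp in auto)
      then have "AE \<omega> in (M0 \<Otimes>\<^sub>M M1). p t \<omega> = \<gamma> *\<^sub>R vcond_exp (M0 \<Otimes>\<^sub>M M1) (F t) Z \<omega>"
      proof (rule AE_mp[OF _ AE_I2[OF impI]])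
        fix \<omega> assume \<omega>: "\<omega> \<in> space (M0 \<Otimes>\<^sub>M M1)"
          and h: "\<forall>i\<in>UNIV. real_cond_exp (M0 \<Otimes>\<^sub>M M1) (F t) (\<lambda>\<eta>. Z \<eta> $ i) \<omega> = V \<omega> $ i"
        have "vcond_exp (M0 \<Otimes>\<^sub>M M1) (F t) Z \<omega> = V \<omega>"
          unfolding vcond_exp_def using h by (simp add: vec_eq_iff)
        then show "p t \<omega> = \<gamma> *\<^sub>R vcond_exp (M0 \<Otimes>\<^sub>M M1) (F t) Z \<omega>"
          using pe[OF \<omega>] \<gamma> unfolding V_def by simp
      qed
      then show ?thesis unfolding Z_def .
    qed
    show ?thesis unfolding adjoint_process_def using pF CE unfolding F_def by blast
  qed
  show ?thesis using ADJ EQ1 EQ2 by blast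
qed


end
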